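(* Let $A$ be a cyclic Leibniz algebra generated by $a$, with notation as in the context. The maximal subalgebras of $A$ are precisely the null spaces $\{b\in A: r_j(L_a)(b)=0\}$, where $r_j(x)=p(x)/p_j(x)$, for $j=1,\dots,s$.
   Context: A (left) Leibniz algebra is an algebra satisfying $x(yz)=(xy)z+y(xz)$ for all $x,y,z$; all algebras are finite-dimensional over a field $F$. $A$ is a cyclic Leibniz algebra generated by $a$: $A$ is generated as an algebra by the single element $a$, and with $a^1=a$, $a^{k+1}=aa^k$, the elements $a,a^2,\dots,a^n$ form a basis of $A$. Write $aa^n=\alpha_2a^2+\cdots+\alpha_na^n$. $L_a:A\to A$ is $b\mapsto ab$, with characteristic (and minimal) polynomial $p(x)=x^n-\alpha_nx^{n-1}-\cdots-\alpha_2x=p_1(x)^{n_1}\cdots p_s(x)^{n_s}$, the $p_j$ distinct monic irreducibles over $F$, $p_1(x)=x$. *)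

theory Defs
  imports "HOL-Computational_Algebra.Computational_Algebra"
begin

text \<open>An algebra over the field 'k is modelled as an ambient type 'v (the whole
algebra A) with a scalar multiplication scale making it a vector space and a
product mul.\<close>

definition bilinear_mult :: "('k::field \<Rightarrow> 'v::ab_group_add \<Rightarrow> 'v) \<Rightarrow> ('v \<Rightarrow> 'v \<Rightarrow> 'v) \<Rightarrow> bool" where
  "bilinear_mult scale mul \<longleftrightarrow>
     (\<forall>x y z. mul (x + y) z = mul x z + mul y z) \<and>
     (\<forall>x y z. mul x (y + z) = mul x y + mul x z) \<and>
     (\<forall>c x y. mul (scale c x) y = scale c (mul x y)) \<and>
     (\<forall>c x y. mul x (scale c y) = scale c (mul x y))"

definition leibniz_algebra :: "('k::field \<Rightarrow> 'v::ab_group_add \<Rightarrow> 'v) \<Rightarrow> ('v \<Rightarrow> 'v \<Rightarrow> 'v) \<Rightarrow> bool" where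
  "leibniz_algebra scale mul \<longleftrightarrow>
     vector_space scale \<and> bilinear_mult scale mul \<and>
     (\<forall>x y z. mul x (mul y z) = mul (mul x y) z + mul y (mul x z))"

text \<open>Left-normed powers: a^1 = a, a^(k+1) = a a^k.\<close>
definition lpow :: "('v \<Rightarrow> 'v \<Rightarrow> 'v) \<Rightarrow> 'v \<Rightarrow> nat \<Rightarrow> 'v" where
  "lpow mul a k = ((mul a) ^^ (k - 1)) a"

definition subalgebra :: "('k::field \<Rightarrow> 'v::ab_group_add \<Rightarrow> 'v) \<Rightarrow> ('v \<Rightarrow> 'v \<Rightarrow> 'v) \<Rightarrow> 'v set \<Rightarrow> bool" where
  "subalgebra scale mul S \<longleftrightarrow> module.subspace scale S \<and> (\<forall>x\<in>S. \<forall>y\<in>S. mul x y \<in> S)"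

definition maximal_subalgebra :: "('k::field \<Rightarrow> 'v::ab_group_add \<Rightarrow> 'v) \<Rightarrow> ('v \<Rightarrow> 'v \<Rightarrow> 'v) \<Rightarrow> 'v set \<Rightarrow> bool" where
  "maximal_subalgebra scale mul S \<longleftrightarrow>
     subalgebra scale mul S \<and> S \<noteq> UNIV \<and>
     (\<forall>T. subalgebra scale mul T \<and> S \<subseteq> T \<longrightarrow> T = S \<or> T = UNIV)"

definition poly_op :: "('k::field \<Rightarrow> 'v::ab_group_add \<Rightarrow> 'v) \<Rightarrow> 'k poly \<Rightarrow> ('v \<Rightarrow> 'v) \<Rightarrow> 'v \<Rightarrow> 'v" where
  "poly_op scale q f v = (\<Sum>i\<le>degree q. scale (coeff q i) ((f ^^ i) v))"

text \<open>p(x) = x^n - alpha_n x^(n-1) - ... - alpha_1 (alpha_1 turns out to be 0).\<close>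
definition cyc_poly :: "nat \<Rightarrow> (nat \<Rightarrow> 'k::field) \<Rightarrow> 'k poly" where
  "cyc_poly n \<alpha> = monom 1 n - (\<Sum>k=1..n. monom (\<alpha> k) (k - 1))"

end

theory Submission imports Defs begin

lemma monic_of:
  fixes b :: "'a::field poly"
  assumes "b \<noteq> 0"
  shows "lead_coeff (smult (inverse (lead_coeff b)) b) = 1 \<and> degree (smult (inverse (lead_coeff b)) b) = degree b
         \<and> smult (inverse (lead_coeff b)) b dvd b"
  using assms by (simp add: lead_coeff_smult smult_dvd_iff)

lemma irr_factor:
  fixes d :: "'a::field poly"
  assumes "d \<noteq> 0" "\<not> is_unit d"
  shows "\<exists>q. irreducible q \<and> lead_coeff q = 1 \<and> q dvd d"
proof -
  let ?D = "\<lambda>e. e dvd d \<and> \<not> is_unit e \<and> lead_coeff e = 1"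
  let ?Q = "\<lambda>k. \<exists>e. ?D e \<and> degree e = k"
  define e0 where "e0 = smult (inverse (lead_coeff d)) d"
  have e0: "lead_coeff e0 = 1" "degree e0 = degree d" "e0 dvd d"
    using monic_of[OF assms(1)] unfolding e0_def by auto
  have "e0 \<noteq> 0" using e0(1) by auto
  then have "\<not> is_unit e0" using e0(2) assms is_unit_iff_degree by metis
  then have ex: "?Q (degree e0)" using e0 by blast
  define m where "m = (LEAST k. ?Q k)"
  have "?Q m" unfolding m_def by (rule LeastI_ex) (use ex in blast)
  then obtain e where e: "?D e" "degree e = m" by blast
  have mle: "m \<le> degree e'" if "?D e'" for e'
    unfolding m_def by (rule Least_le) (use that in blast)
  have enz: "e \<noteq> 0" using e by auto
  have "irreducible e"
  proof (rule irreducibleI)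
    show "e \<noteq> 0" by fact
    show "\<not> e dvd 1" using e by simp
    fix b c assume bc: "e = b * c"
    show "b dvd 1 \<or> c dvd 1"
    proof (rule ccontr)
      assume nu: "\<not> (b dvd 1 \<or> c dvd 1)"
      have bnz: "b \<noteq> 0" "c \<noteq> 0" using bc enz by auto
      have dc: "degree c \<noteq> 0" using nu bnz is_unit_iff_degree by blast
      have db: "degree b \<noteq> 0" using nu bnz is_unit_iff_degree by blast
      define b' where "b' = smult (inverse (lead_coeff b)) b"
      have b': "lead_coeff b' = 1" "degree b' = degree b" "b' dvd b"
        using monic_of[OF bnz(1)] unfolding b'_def by auto
      have "b dvd d" using bc e(1) dvd_trans by (metis dvd_triv_left)
      then have "b' dvd d" using b'(3) dvd_trans by blast
      moreover have "b' \<noteq> 0" using b'(1) by auto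
      ultimately have "?D b'" using b' db is_unit_iff_degree by metis
      then have "m \<le> degree b" using mle b'(2) by metis
      moreover have "degree e = degree b + degree c" using bc degree_mult_eq bnz by simp
      ultimately show False using e(2) dc by simp
    qed
  qed
  then show ?thesis using e by blast
qed

locale cyc = vector_space scale for scale :: "'k::field \<Rightarrow> 'v::ab_group_add \<Rightarrow> 'v" +
  fixes mul :: "'v \<Rightarrow> 'v \<Rightarrow> 'v" and a :: 'v and n :: nat and \<alpha> :: "nat \<Rightarrow> 'k"
  assumes leib: "leibniz_algebra scale mul" and n1: "n \<ge> 1"
    and inj: "inj_on (lpow mul a) {1..n}"
    and indep: "\<not> dependent (lpow mul a ` {1..n})"
    and spanU: "span (lpow mul a ` {1..n}) = UNIV"
    and top: "mul a (lpow mul a n) = (\<Sum>k=1..n. scale (\<alpha> k) (lpow mul a k))"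
begin

abbreviation f where "f \<equiv> mul a"

lemma bil: "bilinear_mult scale mul" using leib by (simp add: leibniz_algebra_def)
lemma mul_addL: "mul (x + y) z = mul x z + mul y z" using bil unfolding bilinear_mult_def by blast
lemma mul_addR: "mul x (y + z) = mul x y + mul x z" using bil unfolding bilinear_mult_def by blast
lemma mul_scaleL: "mul (scale c x) y = scale c (mul x y)" using bil unfolding bilinear_mult_def by blast
lemma mul_scaleR: "mul x (scale c y) = scale c (mul x y)" using bil unfolding bilinear_mult_def by blast
lemma leibniz: "mul x (mul y z) = mul (mul x y) z + mul y (mul x z)" using leib unfolding leibniz_algebra_def by blast
lemma mul_0R[simp]: "mul x 0 = 0" using mul_addR[of x 0 0] by simp
lemma mul_0L[simp]: "mul 0 x = 0" using mul_addL[of 0 0 x] by simp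

definition pop where "pop g v = poly_op scale g f v"

lemma pop_le: assumes "degree g \<le> N"
  shows "pop g v = (\<Sum>i\<le>N. scale (coeff g i) ((f ^^ i) v))"
  unfolding pop_def poly_op_def
  by (rule sum.mono_neutral_left) (auto simp: assms coeff_eq_0 not_le)

lemma pop_0[simp]: "pop 0 v = 0" by (simp add: pop_def poly_op_def)

lemma pop_add: "pop (g + h) v = pop g v + pop h v"
proof -
  let ?N = "max (degree g) (degree h)"
  show ?thesis
    by (simp add: pop_le[of _ ?N] degree_add_le scale_left_distrib sum.distrib)
qed

lemma pop_smult: "pop (smult c g) v = scale c (pop g v)"
  by (simp add: pop_le[of _ "degree g"] scale_sum_right)

lemma pop_pCons: "pop (pCons c g) v = scale c v + pop g (f v)"
proof -
  have "pop (pCons c g) v = (\<Sum>i\<le>Suc (degree g). scale (coeff (pCons c g) i) ((f ^^ i) v))"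
    by (rule pop_le) (simp add: degree_pCons_le)
  also have "\<dots> = scale c v + (\<Sum>i\<le>degree g. scale (coeff g i) ((f ^^ i) (f v)))"
    unfolding sum.atMost_Suc_shift by (simp add: funpow_Suc_right del: funpow.simps)
  also have "\<dots> = scale c v + pop g (f v)" by (simp add: pop_def poly_op_def)
  finally show ?thesis .
qed

lemma f_add: "f (x + y) = f x + f y" by (rule mul_addR)
lemma f_scale: "f (scale c x) = scale c (f x)" by (rule mul_scaleR)

lemma pop_vadd: "pop g (v + w) = pop g v + pop g w"
  by (induction g arbitrary: v w) (simp_all add: pop_pCons f_add scale_right_distrib algebra_simps)

lemma pop_vscale: "pop g (scale c v) = scale c (pop g v)"
  by (induction g arbitrary: v) (simp_all add: pop_pCons f_scale scale_right_distrib scale_left_commute)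

lemma pop_v0[simp]: "pop g 0 = 0"
  using pop_vscale[of g 0 0] by simp

lemma pop_comm: "f (pop g v) = pop g (f v)"
  by (induction g arbitrary: v) (simp_all add: pop_pCons f_add f_scale)

lemma pop_mult: "pop (g * h) v = pop g (pop h v)"
  by (induction g arbitrary: v) (simp_all add: pop_pCons pop_add pop_smult pop_comm)

lemma pop_const[simp]: "pop [:c:] v = scale c v" by (simp add: pop_pCons)
lemma pop_one[simp]: "pop 1 v = v" using pop_const[of 1 v] by (simp add: one_pCons)
lemma pop_neg: "pop (- g) v = - pop g v"
  using pop_smult[of "-1" g v] by (simp add: scale_minus_left)
lemma pop_diff: "pop (g - h) v = pop g v - pop h v"
  using pop_add[of g "-h" v] pop_neg[of h v] by simp
lemma pop_sum: "pop (\<Sum>i\<in>I. g i) v = (\<Sum>i\<in>I. pop (g i) v)"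
  by (induction I rule: infinite_finite_induct) (simp_all add: pop_add)
lemma pop_monom: "pop (monom c k) v = scale c ((f ^^ k) v)"
  by (induction k arbitrary: v) (simp_all add: pop_pCons monom_Suc monom_0 funpow_Suc_right del: funpow.simps)


abbreviation P where "P \<equiv> cyc_poly n \<alpha>"

lemma lpow_eq: "lpow mul a k = (f ^^ (k - 1)) a" by (simp add: lpow_def)

lemma coeff_P: "coeff P i = (if i = n then 1 else 0) - (\<Sum>k=1..n. if k - 1 = i then \<alpha> k else 0)"
  by (simp add: cyc_poly_def coeff_sum coeff_monom)

lemma coeff_P_n: "coeff P n = 1"
proof -
  have "(\<Sum>k=1..n. if k - 1 = n then \<alpha> k else 0) = 0"
    by (rule sum.neutral) (use n1 in auto)
  then show ?thesis by (simp add: coeff_P)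
qed

lemma coeff_P_big: "i > n \<Longrightarrow> coeff P i = 0"
proof -
  assume i: "i > n"
  have "(\<Sum>k=1..n. if k - 1 = i then \<alpha> k else 0) = 0"
    by (rule sum.neutral) (use i in auto)
  then show ?thesis using i by (simp add: coeff_P)
qed

lemma degree_P: "degree P = n"
  by (rule le_antisym) (auto intro!: degree_le le_degree simp: coeff_P_big coeff_P_n)

lemma P_nz: "P \<noteq> 0" using coeff_P_n by auto

lemma phi_P: "pop P a = 0"
proof -
  have "pop P a = (f ^^ n) a - (\<Sum>k=1..n. scale (\<alpha> k) ((f ^^ (k - 1)) a))"
    by (simp add: cyc_poly_def pop_diff pop_sum pop_monom)
  also have "(f ^^ n) a = mul a (lpow mul a n)"
    using n1 by (cases n) (auto simp: lpow_eq)
  finally show ?thesis using top by (simp add: lpow_eq)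
qed

lemma pop_P: "pop P v = 0" if "v = pop g a" for v g
  using that by (simp add: pop_mult[symmetric] mult.commute[of P] pop_mult phi_P)

lemma surj_phi: "\<exists>g. pop g a = v"
proof -
  have "v \<in> span (lpow mul a ` {1..n})" using spanU by simp
  then show ?thesis
  proof (induction rule: span_induct_alt)
    case base then show ?case by (intro exI[of _ 0]) simp
  next
    case (step c x y)
    then obtain k g where "k \<in> {1..n}" "x = lpow mul a k" "pop g a = y" by auto
    then show ?case
      by (intro exI[of _ "monom c (k - 1) + g"]) (simp add: pop_add pop_monom lpow_eq)
  qed
qed

lemma ker_phi: assumes "pop g a = 0" shows "P dvd g"
proof -
  define r where "r = g mod P"
  have "pop r a = pop g a - pop (g div P * P) a"
    unfolding r_def by (simp add: minus_div_mult_eq_mod[symmetric] pop_diff)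
  also have "pop (g div P * P) a = 0" by (simp add: pop_mult phi_P)
  finally have r0: "pop r a = 0" using assms by simp
  have "r = 0"
  proof (rule ccontr)
    assume rnz: "r \<noteq> 0"
    then have dr: "degree r < n" using degree_mod_less[OF P_nz, of g] degree_P r_def by auto
    have "pop r a = (\<Sum>i\<le>n - 1. scale (coeff r i) ((f ^^ i) a))"
      by (rule pop_le) (use dr in auto)
    also have "\<dots> = (\<Sum>k=1..n. scale (coeff r (k - 1)) (lpow mul a k))"
      unfolding lpow_eq
      by (rule sum.reindex_bij_witness[of _ "\<lambda>k. k - 1" Suc]) (use n1 in auto)
    finally have s0: "(\<Sum>k=1..n. scale (coeff r (k - 1)) (lpow mul a k)) = 0" using r0 by simp
    define u where "u v = coeff r (the_inv_into {1..n} (lpow mul a) v - 1)" for v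
    have uk: "u (lpow mul a k) = coeff r (k - 1)" if "k \<in> {1..n}" for k
      unfolding u_def using the_inv_into_f_f[OF inj that] by simp
    have "(\<Sum>v\<in>lpow mul a ` {1..n}. scale (u v) v) = (\<Sum>k=1..n. scale (u (lpow mul a k)) (lpow mul a k))"
      by (rule sum.reindex[OF inj, unfolded comp_def])
    also have "\<dots> = 0" using s0 by (simp add: uk)
    finally have "\<forall>v\<in>lpow mul a ` {1..n}. u v = 0"
      using indep dependent_finite[of "lpow mul a ` {1..n}"] by auto
    then have "coeff r i = 0" for i
      using uk[of "Suc i"] coeff_eq_0[of r i] dr by (cases "i < n") auto
    then show False using rnz by (simp add: poly_eq_iff)
  qed
  then show ?thesis by (simp add: r_def mod_eq_0_iff_dvd)
qed

lemma phi_eq: "pop g a = pop h a \<Longrightarrow> P dvd g - h"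
  by (rule ker_phi) (simp add: pop_diff)


definition Z where "Z w \<longleftrightarrow> (\<forall>z. mul w z = 0)"

lemma mul_negL: "mul (- x) y = - mul x y"
  using mul_addL[of x "-x" y] by (simp add: eq_neg_iff_add_eq_0 add.commute)

lemma Z_fa: "Z (f a)"
  unfolding Z_def using leibniz[of a a] by simp

lemma Z_f: "Z w \<Longrightarrow> Z (f w)"
  unfolding Z_def using leibniz[of a w] by simp

lemma Z_add: "Z v \<Longrightarrow> Z w \<Longrightarrow> Z (v + w)" unfolding Z_def by (simp add: mul_addL)
lemma Z_scale: "Z w \<Longrightarrow> Z (scale c w)" unfolding Z_def by (simp add: mul_scaleL)
lemma Z_neg: "Z w \<Longrightarrow> Z (- w)" unfolding Z_def by (simp add: mul_negL)
lemma Z_diff: "Z v \<Longrightarrow> Z w \<Longrightarrow> Z (v - w)" using Z_add[of v "-w"] Z_neg by simp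
lemma Z_0: "Z 0" unfolding Z_def by simp
lemma Z_sum: "(\<And>i. i \<in> I \<Longrightarrow> Z (g i)) \<Longrightarrow> Z (\<Sum>i\<in>I. g i)"
  by (induction I rule: infinite_finite_induct) (auto simp: Z_0 Z_add)
lemma Z_funpow: "Z w \<Longrightarrow> Z ((f ^^ k) w)"
  by (induction k) (auto simp: Z_f)
lemma Z_pop: "Z w \<Longrightarrow> Z (pop g w)"
  by (induction g arbitrary: w) (auto simp: pop_pCons Z_add Z_scale Z_f Z_0)

lemma mul_phi: "mul (pop g a) y = scale (coeff g 0) (f y)"
proof (cases g rule: pCons_cases)
  case (pCons c g')
  have "Z (pop g' (f a))" by (rule Z_pop[OF Z_fa])
  then show ?thesis using pCons by (simp add: pop_pCons mul_addL mul_scaleL Z_def)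
qed

lemma a_nz: "a \<noteq> 0"
proof
  assume "a = 0"
  then have "0 \<in> lpow mul a ` {1..n}" using n1 by (auto simp: lpow_def intro!: image_eqI[of _ _ 1])
  then show False using indep dependent_zero by blast
qed

lemma f0: "(f ^^ k) 0 = 0" by (induction k) auto

lemma alpha1: "\<alpha> 1 = 0"
proof (rule ccontr)
  assume nz: "\<alpha> 1 \<noteq> 0"
  obtain m where m: "n = Suc m" using n1 by (cases n) auto
  have top': "(f ^^ n) a = scale (\<alpha> 1) a + (\<Sum>k=2..n. scale (\<alpha> k) ((f ^^ (k - 1)) a))"
  proof -
    have "(f ^^ n) a = mul a (lpow mul a n)" using m by (simp add: lpow_eq)
    also have "\<dots> = (\<Sum>k=1..n. scale (\<alpha> k) ((f ^^ (k - 1)) a))" using top by (simp add: lpow_eq)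
    also have "\<dots> = scale (\<alpha> 1) a + (\<Sum>k=Suc 1..n. scale (\<alpha> k) ((f ^^ (k - 1)) a))"
      using n1 by (subst sum.atLeast_Suc_atMost) auto
    finally show ?thesis by (simp add: numeral_2_eq_2)
  qed
  have fk: "(f ^^ k) a = (f ^^ (k - 1)) (f a)" if "k \<ge> 1" for k
    using that by (cases k) (auto simp: funpow_Suc_right simp del: funpow.simps)
  have Zn: "Z ((f ^^ n) a)" using fk[of n] n1 Z_funpow[OF Z_fa] by simp
  have Zs: "Z (\<Sum>k=2..n. scale (\<alpha> k) ((f ^^ (k - 1)) a))"
    by (rule Z_sum) (use fk Z_funpow[OF Z_fa] Z_scale in auto)
  have "scale (\<alpha> 1) a = (f ^^ n) a - (\<Sum>k=2..n. scale (\<alpha> k) ((f ^^ (k - 1)) a))"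
    using top' by simp
  then have "Z (scale (\<alpha> 1) a)" using Z_diff[OF Zn Zs] by simp
  then have "Z (scale (inverse (\<alpha> 1)) (scale (\<alpha> 1) a))" by (rule Z_scale)
  then have Za: "Z a" using nz by simp
  then have fa0: "f a = 0" by (simp add: Z_def)
  have fk0: "(f ^^ k) a = 0" if "k \<ge> 1" for k using fk[OF that] fa0 f0 by simp
  have "(\<Sum>k=2..n. scale (\<alpha> k) ((f ^^ (k - 1)) a)) = 0"
    by (rule sum.neutral) (auto simp: fk0)
  then have "scale (\<alpha> 1) a = 0" using top' fk0[OF n1] by simp
  then show False using nz a_nz by simp
qed

abbreviation X :: "'k poly" where "X \<equiv> [:0, 1:]"

lemma X_dvd: "X dvd P"
proof -
  have "(\<Sum>k=1..n. if k - 1 = 0 then \<alpha> k else 0) = 0"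
    by (rule sum.neutral) (use alpha1 in \<open>auto simp: le_Suc_eq\<close>)
  then have "coeff P 0 = 0" using n1 by (simp add: coeff_P)
  then show ?thesis by (simp add: dvd_iff_poly_eq_0 poly_0_coeff_0)
qed

lemma X_irr: "irreducible X" by (rule irreducible_linear_field_poly) simp

lemma pop_dvd: "P dvd g \<Longrightarrow> pop g a = 0"
  by (auto simp: mult.commute[of P] pop_mult phi_P)

definition M where "M q = {b. pop (P div q) b = 0}"

lemma M_char: assumes "q dvd P" shows "pop g a \<in> M q \<longleftrightarrow> q dvd g"
proof -
  have qnz: "q \<noteq> 0" using assms P_nz by auto
  have Pq: "P = q * (P div q)" using assms by simp
  have rnz: "P div q \<noteq> 0" using Pq P_nz by (metis mult_zero_right)
  have "pop g a \<in> M q \<longleftrightarrow> pop (P div q * g) a = 0" by (simp add: M_def pop_mult)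
  also have "\<dots> \<longleftrightarrow> P dvd (P div q * g)"
    using ker_phi pop_dvd by blast
  also have "\<dots> \<longleftrightarrow> q * (P div q) dvd g * (P div q)" using Pq by (simp add: mult.commute)
  also have "\<dots> \<longleftrightarrow> q dvd g" using rnz by simp
  finally show ?thesis .
qed

definition inv where "inv W \<longleftrightarrow> subspace W \<and> (\<forall>x\<in>W. f x \<in> W)"

lemma inv_pop: "inv W \<Longrightarrow> v \<in> W \<Longrightarrow> pop g v \<in> W"
  by (induction g arbitrary: v) (auto simp: pop_pCons inv_def intro: subspace_add subspace_scale subspace_0)

lemma inv_sub: assumes "inv W" shows "subalgebra scale mul W"
  unfolding subalgebra_def
proof (intro conjI ballI)
  show "subspace W" using assms by (simp add: inv_def)
  fix x y assume "x \<in> W" "y \<in> W"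
  obtain g where "pop g a = x" using surj_phi by blast
  then show "mul x y \<in> W" using assms \<open>y \<in> W\<close>
    by (auto simp: mul_phi inv_def intro!: subspace_scale)
qed

lemma inv_a: assumes "inv W" "a \<in> W" shows "W = UNIV"
proof -
  have "v \<in> W" for v
  proof -
    obtain g where "pop g a = v" using surj_phi by blast
    then show ?thesis using inv_pop[OF assms] by blast
  qed
  then show ?thesis by auto
qed

lemma M_inv: "inv (M q)"
  unfolding inv_def subspace_def M_def
  by (auto simp: pop_vadd pop_vscale pop_comm[symmetric])

lemma M_sub: "subalgebra scale mul (M q)" by (rule inv_sub[OF M_inv])

lemma M_proper: assumes "q dvd P" "\<not> is_unit q" shows "M q \<noteq> UNIV"
proof
  assume "M q = UNIV"
  then have "pop 1 a \<in> M q" by simp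
  then show False using M_char[OF assms(1)] assms(2) by blast
qed

lemma notinv_range: assumes "subalgebra scale mul T" "\<not> (\<forall>x\<in>T. f x \<in> T)"
  shows "T \<subseteq> M X"
proof
  obtain y where y: "y \<in> T" "f y \<notin> T" using assms(2) by blast
  have sT: "subspace T" using assms(1) by (simp add: subalgebra_def)
  fix x assume x: "x \<in> T"
  obtain g where g: "pop g a = x" using surj_phi by blast
  have "mul x y \<in> T" using assms(1) x y by (simp add: subalgebra_def)
  then have m: "scale (coeff g 0) (f y) \<in> T" using mul_phi[of g y] g by simp
  have c0: "coeff g 0 = 0"
  proof (rule ccontr)
    assume "coeff g 0 \<noteq> 0"
    then have "scale (inverse (coeff g 0)) (scale (coeff g 0) (f y)) = f y" by simp
    then show False using subspace_scale[OF sT m, of "inverse (coeff g 0)"] y by simp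
  qed
  obtain c g' where g': "g = pCons c g'" by (cases g rule: pCons_cases)
  then have "g = X * g'" using c0 by simp
  then have "X dvd g" by (rule dvdI)
  then show "x \<in> M X" using M_char[OF X_dvd, of g] g by simp
qed

lemma ideal_gen: assumes "inv W"
  shows "\<exists>d. pop d a \<in> W \<and> d \<noteq> 0 \<and> (\<forall>g. pop g a \<in> W \<longrightarrow> d dvd g)"
proof -
  have sW: "subspace W" using assms by (simp add: inv_def)
  let ?Q = "\<lambda>k. \<exists>e. pop e a \<in> W \<and> e \<noteq> 0 \<and> degree e = k"
  have ex: "?Q (degree P)" using P_nz phi_P subspace_0[OF sW] by (intro exI[of _ P]) simp
  define m where "m = (LEAST k. ?Q k)"
  have "?Q m" unfolding m_def by (rule LeastI_ex) (use ex in blast)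
  then obtain d where d: "pop d a \<in> W" "d \<noteq> 0" "degree d = m" by blast
  have mle: "m \<le> degree e" if "pop e a \<in> W" "e \<noteq> 0" for e
    unfolding m_def by (rule Least_le) (use that in auto)
  have "d dvd g" if g: "pop g a \<in> W" for g
  proof -
    have "pop (g mod d) a = pop g a - pop (g div d) (pop d a)"
      by (simp add: minus_div_mult_eq_mod[symmetric] pop_diff pop_mult)
    also have "\<dots> \<in> W" using g d(1) assms inv_pop sW subspace_diff by blast
    finally have r: "pop (g mod d) a \<in> W" .
    have "g mod d = 0"
    proof (rule ccontr)
      assume "g mod d \<noteq> 0"
      then have "degree (g mod d) < degree d" using degree_mod_less[OF d(2), of g] by auto
      then show False using mle[OF r \<open>g mod d \<noteq> 0\<close>] d(3) by simp
    qed
    then show ?thesis by (simp add: mod_eq_0_iff_dvd)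
  qed
  then show ?thesis using d by blast
qed


lemma X_nu: "\<not> is_unit X" using is_unit_iff_degree[of X] by simp

lemma M_max: assumes q: "irreducible q" "lead_coeff q = 1" "q dvd P"
  shows "maximal_subalgebra scale mul (M q)"
  unfolding maximal_subalgebra_def
proof (intro conjI allI impI)
  show "subalgebra scale mul (M q)" by (rule M_sub)
  have nu: "\<not> is_unit q" using q(1) irreducible_not_unit by blast
  show "M q \<noteq> UNIV" by (rule M_proper[OF q(3) nu])
  fix T assume T: "subalgebra scale mul T \<and> M q \<subseteq> T"
  have pq: "pop q a \<in> M q" using M_char[OF q(3)] by simp
  show "T = M q \<or> T = UNIV"
  proof (cases "\<forall>x\<in>T. f x \<in> T")
    case True
    then have iT: "inv T" using T by (simp add: inv_def subalgebra_def)
    show ?thesis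
    proof (cases "T \<subseteq> M q")
      case True then show ?thesis using T by auto
    next
      case False
      then obtain t where t: "t \<in> T" "t \<notin> M q" by blast
      obtain g where g: "pop g a = t" using surj_phi by blast
      have ng: "\<not> q dvd g" using t g M_char[OF q(3)] by auto
      obtain d where d: "pop d a \<in> T" "d \<noteq> 0" "\<forall>g. pop g a \<in> T \<longrightarrow> d dvd g"
        using ideal_gen[OF iT] by blast
      have "d dvd q" using d(3) pq T by auto
      then obtain e where e: "q = d * e" by (rule dvdE)
      from irreducibleD[OF q(1) e] show ?thesis
      proof
        assume "d dvd 1"
        then obtain k where k: "1 = d * k" by (rule dvdE)
        have "pop 1 a = pop k (pop d a)" by (metis k mult.commute pop_mult)
        then have "a \<in> T" using inv_pop[OF iT d(1), of k] by simp
        then show ?thesis using inv_a[OF iT] by simp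
      next
        assume "e dvd 1"
        then obtain k where k: "1 = e * k" by (rule dvdE)
        have "d = q * k" using e k by (metis mult.assoc mult_1_right)
        then have "q dvd d" by simp
        moreover have "d dvd g" using d(3) g t by simp
        ultimately show ?thesis using ng dvd_trans by blast
      qed
    qed
  next
    case False
    then have TX: "T \<subseteq> M X" using notinv_range T by blast
    then have "pop q a \<in> M X" using pq T by blast
    then have "X dvd q" using M_char[OF X_dvd] by simp
    then obtain h where h: "q = X * h" by (rule dvdE)
    from irreducibleD[OF q(1) h] X_nu have "h dvd 1" by blast
    then obtain c where c: "h = [:c:]" using is_unit_poly_iff by blast
    have "lead_coeff q = c" using h c by (simp add: lead_coeff_mult)
    then have "q = X" using h c q(2) by simp
    then show ?thesis using TX T by auto
  qed
qed

lemma max_M: assumes S: "maximal_subalgebra scale mul S"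
  shows "\<exists>q. irreducible q \<and> lead_coeff q = 1 \<and> q dvd P \<and> S = M q"
proof -
  have sS: "subalgebra scale mul S" and nU: "S \<noteq> UNIV"
    and mx: "\<And>T. subalgebra scale mul T \<Longrightarrow> S \<subseteq> T \<Longrightarrow> T = S \<or> T = UNIV"
    using S unfolding maximal_subalgebra_def by blast+
  show ?thesis
  proof (cases "\<forall>x\<in>S. f x \<in> S")
    case True
    then have iS: "inv S" using sS by (simp add: inv_def subalgebra_def)
    obtain d where d: "pop d a \<in> S" "d \<noteq> 0" "\<forall>g. pop g a \<in> S \<longrightarrow> d dvd g"
      using ideal_gen[OF iS] by blast
    have "pop P a \<in> S" using phi_P iS subspace_0 by (simp add: inv_def)
    then have dP: "d dvd P" using d by blast
    have nu: "\<not> is_unit d"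
    proof
      assume "d dvd 1"
      then obtain k where k: "1 = d * k" by (rule dvdE)
      have "pop 1 a = pop k (pop d a)" by (metis k mult.commute pop_mult)
      then have "a \<in> S" using inv_pop[OF iS d(1), of k] by simp
      then show False using inv_a[OF iS] nU by simp
    qed
    obtain q where q: "irreducible q" "lead_coeff q = 1" "q dvd d"
      using irr_factor[OF d(2) nu] by blast
    have qP: "q dvd P" using q(3) dP dvd_trans by blast
    have "S \<subseteq> M q"
    proof
      fix s assume s: "s \<in> S"
      obtain g where g: "pop g a = s" using surj_phi by blast
      have "q dvd g" using d(3) g s q(3) dvd_trans by blast
      then show "s \<in> M q" using M_char[OF qP, of g] g by simp
    qed
    then have "M q = S \<or> M q = UNIV" using mx M_sub by blast
    moreover have "M q \<noteq> UNIV" using M_proper[OF qP] q(1) irreducible_not_unit by blast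
    ultimately show ?thesis using q qP by auto
  next
    case False
    then have "S \<subseteq> M X" using notinv_range sS by blast
    then have "M X = S \<or> M X = UNIV" using mx M_sub by blast
    moreover have "M X \<noteq> UNIV" using M_proper[OF X_dvd X_nu] .
    ultimately show ?thesis using X_irr X_dvd by (intro exI[of _ X]) auto
  qed
qed

theorem main: "{S. maximal_subalgebra scale mul S} =
  (\<lambda>q. {b. poly_op scale (P div q) f b = 0}) ` {q. irreducible q \<and> lead_coeff q = 1 \<and> q dvd P}"
proof -
  have eq: "(\<lambda>q. {b. poly_op scale (P div q) f b = 0}) = M"
    by (rule ext) (simp only: M_def pop_def)
  show ?thesis unfolding eq
  proof (intro set_eqI iffI)
    fix S assume "S \<in> {S. maximal_subalgebra scale mul S}"
    then obtain q where "irreducible q" "lead_coeff q = 1" "q dvd P" "S = M q"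
      using max_M by blast
    then show "S \<in> M ` {q. irreducible q \<and> lead_coeff q = 1 \<and> q dvd P}" by blast
  next
    fix S assume "S \<in> M ` {q. irreducible q \<and> lead_coeff q = 1 \<and> q dvd P}"
    then obtain q where "irreducible q" "lead_coeff q = 1" "q dvd P" "S = M q" by blast
    then show "S \<in> {S. maximal_subalgebra scale mul S}" using M_max by simp
  qed
qed

end

theorem mainTheorem9:
  fixes scale :: "'k::field \<Rightarrow> 'v::ab_group_add \<Rightarrow> 'v"
    and mul :: "'v \<Rightarrow> 'v \<Rightarrow> 'v"
    and a :: 'v and n :: nat and \<alpha> :: "nat \<Rightarrow> 'k"
  assumes "leibniz_algebra scale mul"
    and "n \<ge> 1"
    and "inj_on (lpow mul a) {1..n}"
    and "\<not> module.dependent scale (lpow mul a ` {1..n})"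
    and "module.span scale (lpow mul a ` {1..n}) = UNIV"
    and "mul a (lpow mul a n) = (\<Sum>k=1..n. scale (\<alpha> k) (lpow mul a k))"
  shows "{S. maximal_subalgebra scale mul S} =
           (\<lambda>q. {b. poly_op scale (cyc_poly n \<alpha> div q) (mul a) b = 0})
             ` {q. irreducible q \<and> lead_coeff q = 1 \<and> q dvd cyc_poly n \<alpha>}"
proof -
  have vs: "vector_space scale" using assms(1) unfolding leibniz_algebra_def by blast
  have c: "cyc scale mul a n \<alpha>"
    by (rule cyc.intro[OF vs cyc_axioms.intro[OF assms]])
  show ?thesis by (rule cyc.main[OF c])
qed

end
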